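(* Let $f:X\to Y$ be a map of algebraic Kan complexes. Then $f$ sends thin simplices to thin simplices. In particular, if $\alpha$ and $\beta$ are co-thin simplices of $X$, then $f\alpha$ and $f\beta$ are co-thin simplices of $Y$.
   Context: An algebraic Kan complex is a simplicial set $X$ together with a function $\text{fill}_X$ assigning to every horn $h:\Lambda^n_k\to X$ a chosen filler $\text{fill}_X(h):\Delta^n\to X$ extending $h$ (a "distinguished filler"); a map of algebraic Kan complexes is a simplicial map $f$ with $f(\text{fill}_X(h))=\text{fill}_Y(f\circ h)$ for all horns $h$. A simplex of an algebraic Kan complex is called thin, inductively, if it is degenerate, or is a distinguished filler, or is a composition of thin simplices (i.e. it is the $k$-th face of the distinguished filler of a horn $\Lambda^n_k\to X$ all of whose faces are thin). Two thin simplices $\alpha,\beta:\Delta^n\to X$ are co-thin if there is a horn $\Lambda^n_k\to X$ of which both are extensions (they agree on some $\Lambda^n_k$). *)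

theory Defs
  imports Main
begin

text \<open>Simplicial sets, presented by their graded sets of simplices together with
face and degeneracy operators.  simp X n is the set X_n of n-simplices;
face X n i : X_n -> X_(n-1) is d_i (for n >= 1, i <= n);
degen X n i : X_n -> X_(n+1) is s_i (for i <= n).\<close>

record 'a sset =
  simp  :: "nat \<Rightarrow> 'a set"
  face  :: "nat \<Rightarrow> nat \<Rightarrow> 'a \<Rightarrow> 'a"
  degen :: "nat \<Rightarrow> nat \<Rightarrow> 'a \<Rightarrow> 'a"

definition simplicial_set :: "'a sset \<Rightarrow> bool" where
  "simplicial_set X \<longleftrightarrow>
     (\<forall>n i x. 1 \<le> n \<and> i \<le> n \<and> x \<in> simp X n \<longrightarrow> face X n i x \<in> simp X (n - 1)) \<and>
     (\<forall>n i x. i \<le> n \<and> x \<in> simp X n \<longrightarrow> degen X n i x \<in> simp X (Suc n)) \<and>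
     \<comment> \<open>d_i d_j = d_(j-1) d_i for i < j\<close>
     (\<forall>n i j x. 2 \<le> n \<and> i < j \<and> j \<le> n \<and> x \<in> simp X n \<longrightarrow>
        face X (n - 1) i (face X n j x) = face X (n - 1) (j - 1) (face X n i x)) \<and>
     \<comment> \<open>d_i s_j = s_(j-1) d_i for i < j\<close>
     (\<forall>n i j x. i < j \<and> j \<le> n \<and> x \<in> simp X n \<longrightarrow>
        face X (Suc n) i (degen X n j x) = degen X (n - 1) (j - 1) (face X n i x)) \<and>
     \<comment> \<open>d_j s_j = d_(j+1) s_j = id\<close>
     (\<forall>n j x. j \<le> n \<and> x \<in> simp X n \<longrightarrow>
        face X (Suc n) j (degen X n j x) = x \<and> face X (Suc n) (Suc j) (degen X n j x) = x) \<and>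
     \<comment> \<open>d_i s_j = s_j d_(i-1) for i > j + 1\<close>
     (\<forall>n i j x. Suc j < i \<and> i \<le> Suc n \<and> x \<in> simp X n \<longrightarrow>
        face X (Suc n) i (degen X n j x) = degen X (n - 1) j (face X n (i - 1) x)) \<and>
     \<comment> \<open>s_i s_j = s_(j+1) s_i for i <= j\<close>
     (\<forall>n i j x. i \<le> j \<and> j \<le> n \<and> x \<in> simp X n \<longrightarrow>
        degen X (Suc n) i (degen X n j x) = degen X (Suc n) (Suc j) (degen X n i x))"

text \<open>A horn h : Lambda^n_k -> X (n >= 1, k <= n) is, by the Yoneda lemma, the same as a
compatible family of (n-1)-simplices h i (i <= n, i \<noteq> k), with d_i (h j) = d_(j-1) (h i)
for i < j.  We normalise the representing function to be undefined outside the
relevant indices, so that each horn has a unique representative.\<close>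

definition horn :: "'a sset \<Rightarrow> nat \<Rightarrow> nat \<Rightarrow> (nat \<Rightarrow> 'a) \<Rightarrow> bool" where
  "horn X n k h \<longleftrightarrow> 1 \<le> n \<and> k \<le> n \<and>
     (\<forall>i. i \<le> n \<and> i \<noteq> k \<longrightarrow> h i \<in> simp X (n - 1)) \<and>
     (\<forall>i j. i < j \<and> j \<le> n \<and> i \<noteq> k \<and> j \<noteq> k \<longrightarrow>
        face X (n - 1) i (h j) = face X (n - 1) (j - 1) (h i)) \<and>
     (\<forall>i. (n < i \<or> i = k) \<longrightarrow> h i = undefined)"

definition extends_horn :: "'a sset \<Rightarrow> nat \<Rightarrow> nat \<Rightarrow> (nat \<Rightarrow> 'a) \<Rightarrow> 'a \<Rightarrow> bool" where
  "extends_horn X n k h x \<longleftrightarrow> x \<in> simp X n \<and> (\<forall>i. i \<le> n \<and> i \<noteq> k \<longrightarrow> face X n i x = h i)"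

definition alg_kan :: "'a sset \<Rightarrow> (nat \<Rightarrow> nat \<Rightarrow> (nat \<Rightarrow> 'a) \<Rightarrow> 'a) \<Rightarrow> bool" where
  "alg_kan X fill \<longleftrightarrow> simplicial_set X \<and>
     (\<forall>n k h. horn X n k h \<longrightarrow> extends_horn X n k h (fill n k h))"

definition horn_comp :: "(nat \<Rightarrow> 'a \<Rightarrow> 'b) \<Rightarrow> nat \<Rightarrow> nat \<Rightarrow> (nat \<Rightarrow> 'a) \<Rightarrow> (nat \<Rightarrow> 'b)" where
  "horn_comp f n k h = (\<lambda>i. if i \<le> n \<and> i \<noteq> k then f (n - 1) (h i) else undefined)"

definition simplicial_map :: "'a sset \<Rightarrow> 'b sset \<Rightarrow> (nat \<Rightarrow> 'a \<Rightarrow> 'b) \<Rightarrow> bool" where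
  "simplicial_map X Y f \<longleftrightarrow>
     (\<forall>n x. x \<in> simp X n \<longrightarrow> f n x \<in> simp Y n) \<and>
     (\<forall>n i x. 1 \<le> n \<and> i \<le> n \<and> x \<in> simp X n \<longrightarrow> f (n - 1) (face X n i x) = face Y n i (f n x)) \<and>
     (\<forall>n i x. i \<le> n \<and> x \<in> simp X n \<longrightarrow> f (Suc n) (degen X n i x) = degen Y n i (f n x))"

definition alg_kan_map ::
  "'a sset \<Rightarrow> (nat \<Rightarrow> nat \<Rightarrow> (nat \<Rightarrow> 'a) \<Rightarrow> 'a) \<Rightarrow> 'b sset \<Rightarrow> (nat \<Rightarrow> nat \<Rightarrow> (nat \<Rightarrow> 'b) \<Rightarrow> 'b)
   \<Rightarrow> (nat \<Rightarrow> 'a \<Rightarrow> 'b) \<Rightarrow> bool" where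
  "alg_kan_map X fillX Y fillY f \<longleftrightarrow> simplicial_map X Y f \<and>
     (\<forall>n k h. horn X n k h \<longrightarrow> f n (fillX n k h) = fillY n k (horn_comp f n k h))"

inductive thin :: "'a sset \<Rightarrow> (nat \<Rightarrow> nat \<Rightarrow> (nat \<Rightarrow> 'a) \<Rightarrow> 'a) \<Rightarrow> nat \<Rightarrow> 'a \<Rightarrow> bool"
  for X fill where
  degenerate: "\<lbrakk> y \<in> simp X n; i \<le> n \<rbrakk> \<Longrightarrow> thin X fill (Suc n) (degen X n i y)"
| filler: "horn X n k h \<Longrightarrow> thin X fill n (fill n k h)"
| composite: "\<lbrakk> horn X n k h; \<forall>i. i \<le> n \<and> i \<noteq> k \<longrightarrow> thin X fill (n - 1) (h i) \<rbrakk>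
     \<Longrightarrow> thin X fill (n - 1) (face X n k (fill n k h))"

definition cothin :: "'a sset \<Rightarrow> (nat \<Rightarrow> nat \<Rightarrow> (nat \<Rightarrow> 'a) \<Rightarrow> 'a) \<Rightarrow> nat \<Rightarrow> 'a \<Rightarrow> 'a \<Rightarrow> bool" where
  "cothin X fill n a b \<longleftrightarrow> thin X fill n a \<and> thin X fill n b \<and>
     (\<exists>k h. horn X n k h \<and> extends_horn X n k h a \<and> extends_horn X n k h b)"

end

theory Submission
  imports Defs
begin

lemma horn_comp_horn:
  assumes sm: "simplicial_map X Y f" and h: "horn X n k h"
  shows "horn Y n k (horn_comp f n k h)"
proof -
  have n1: "1 \<le> n" "k \<le> n" using h by (auto simp: horn_def)
  have A: "\<forall>i. i \<le> n \<and> i \<noteq> k \<longrightarrow> horn_comp f n k h i \<in> simp Y (n - 1)"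
    using h sm by (auto simp: horn_def horn_comp_def simplicial_map_def)
  have B: "face Y (n - 1) i (horn_comp f n k h j) = face Y (n - 1) (j - 1) (horn_comp f n k h i)"
    if "i < j" "j \<le> n" "i \<noteq> k" "j \<noteq> k" for i j
  proof -
    have n2: "1 \<le> n - 1" using that n1 by auto
    have hi: "h i \<in> simp X (n - 1)" "h j \<in> simp X (n - 1)" using h that by (auto simp: horn_def)
    have eq: "face X (n - 1) i (h j) = face X (n - 1) (j - 1) (h i)" using h that by (auto simp: horn_def)
    have fi': "\<And>m x. m \<le> n - 1 \<Longrightarrow> x \<in> simp X (n - 1) \<Longrightarrow> f (n - 1 - 1) (face X (n - 1) m x) = face Y (n - 1) m (f (n - 1) x)"
      using sm n2 unfolding simplicial_map_def by blast
    have "face Y (n - 1) i (horn_comp f n k h j) = face Y (n - 1) i (f (n - 1) (h j))"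
      using that by (simp add: horn_comp_def)
    also have "\<dots> = f (n - 1 - 1) (face X (n - 1) i (h j))" using fi' hi that by simp
    also have "\<dots> = f (n - 1 - 1) (face X (n - 1) (j - 1) (h i))" using eq by simp
    also have "\<dots> = face Y (n - 1) (j - 1) (f (n - 1) (h i))" using fi' hi that by simp
    also have "\<dots> = face Y (n - 1) (j - 1) (horn_comp f n k h i)" using that by (simp add: horn_comp_def)
    finally show ?thesis .
  qed
  show ?thesis unfolding horn_def using n1 A B by (auto simp: horn_comp_def)
qed

theorem mainTheorem6:
  fixes X :: "'a sset" and Y :: "'b sset"
    and fillX :: "nat \<Rightarrow> nat \<Rightarrow> (nat \<Rightarrow> 'a) \<Rightarrow> 'a"
    and fillY :: "nat \<Rightarrow> nat \<Rightarrow> (nat \<Rightarrow> 'b) \<Rightarrow> 'b"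
    and f :: "nat \<Rightarrow> 'a \<Rightarrow> 'b"
  assumes "alg_kan X fillX" and "alg_kan Y fillY"
    and "alg_kan_map X fillX Y fillY f"
  shows "(\<forall>n x. thin X fillX n x \<longrightarrow> thin Y fillY n (f n x)) \<and>
         (\<forall>n a b. cothin X fillX n a b \<longrightarrow> cothin Y fillY n (f n a) (f n b))"
proof -
  have sm: "simplicial_map X Y f" using assms(3) by (simp add: alg_kan_map_def)
  have fm: "\<And>n k h. horn X n k h \<Longrightarrow> f n (fillX n k h) = fillY n k (horn_comp f n k h)"
    using assms(3) by (simp add: alg_kan_map_def)
  have ext: "\<And>n k h. horn X n k h \<Longrightarrow> extends_horn X n k h (fillX n k h)"
    using assms(1) by (simp add: alg_kan_def)
  have T: "thin Y fillY n (f n x)" if "thin X fillX n x" for n x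
    using that
  proof (induction rule: thin.induct)
    case (degenerate y n i)
    have "f (Suc n) (degen X n i y) = degen Y n i (f n y)"
      using sm degenerate by (simp add: simplicial_map_def)
    moreover have "f n y \<in> simp Y n" using sm degenerate by (simp add: simplicial_map_def)
    ultimately show ?case using degenerate by (simp add: thin.degenerate)
  next
    case (filler n k h)
    then show ?case using fm horn_comp_horn[OF sm] by (simp add: thin.filler)
  next
    case (composite n k h)
    have hc: "horn Y n k (horn_comp f n k h)" using horn_comp_horn[OF sm composite(1)] .
    have n1: "1 \<le> n" "k \<le> n" using composite(1) by (auto simp: horn_def)
    have fs: "fillX n k h \<in> simp X n" using ext[OF composite(1)] by (simp add: extends_horn_def)
    have "f (n - 1) (face X n k (fillX n k h)) = face Y n k (f n (fillX n k h))"
      using sm n1 fs by (simp add: simplicial_map_def)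
    also have "\<dots> = face Y n k (fillY n k (horn_comp f n k h))" using fm composite(1) by simp
    finally have eq: "f (n - 1) (face X n k (fillX n k h)) = face Y n k (fillY n k (horn_comp f n k h))" .
    have "\<forall>i. i \<le> n \<and> i \<noteq> k \<longrightarrow> thin Y fillY (n - 1) (horn_comp f n k h i)"
      using composite(2) by (simp add: horn_comp_def)
    then show ?case unfolding eq using hc by (rule thin.composite[rotated])
  qed
  have C: "cothin Y fillY n (f n a) (f n b)" if ct: "cothin X fillX n a b" for n a b
  proof -
    obtain k h where h: "horn X n k h" "extends_horn X n k h a" "extends_horn X n k h b"
      using ct unfolding cothin_def by blast
    have n1: "1 \<le> n" using h(1) by (simp add: horn_def)
    have E: "extends_horn Y n k (horn_comp f n k h) (f n c)" if "extends_horn X n k h c" for c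
    proof -
      have "f n c \<in> simp Y n" using sm that by (simp add: simplicial_map_def extends_horn_def)
      moreover have "face Y n i (f n c) = horn_comp f n k h i" if "i \<le> n" "i \<noteq> k" for i
      proof -
        have "face Y n i (f n c) = f (n - 1) (face X n i c)"
          using sm n1 that \<open>extends_horn X n k h c\<close> unfolding simplicial_map_def extends_horn_def by metis
        also have "\<dots> = f (n - 1) (h i)" using that \<open>extends_horn X n k h c\<close> by (simp add: extends_horn_def)
        finally show ?thesis using that by (simp add: horn_comp_def)
      qed
      ultimately show ?thesis by (simp add: extends_horn_def)
    qed
    have ta: "thin X fillX n a" "thin X fillX n b" using ct unfolding cothin_def by blast+
    show ?thesis unfolding cothin_def
      using T[OF ta(1)] T[OF ta(2)] horn_comp_horn[OF sm h(1)] E[OF h(2)] E[OF h(3)] by blast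
  qed
  show ?thesis using T C by blast
qed

end
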